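(* Let $(E,\mathcal{E},\nu)$ be a $\sigma$-finite measure space, $\phi$ a Young function satisfying the $\Delta_2$-condition, $w$ a weight function, and $\Psi:E\to E$ a non-singular measurable transformation inducing the composition operator $C_\Psi f=f\circ\Psi$ on the Orlicz-Lorentz space $L_{(\phi,w)}$, such that $\Psi(S)\in\mathcal{E}$ for every $S\in\mathcal{E}$. If $\mathcal{A}(C_\Psi)=\infty$, then there exists a sequence $(A_m)$ of measurable subsets of $E$ such that for all $m>1$: (1) $0<\nu(A_m)<\infty$; (2) $A_m\subseteq\Psi^{m-1}(B)$ for some $B\in\mathcal{E}$; (3) $A_m\notin\{\Psi^m(S): S\in\mathcal{E},\ \nu(S)>0\}$.
   Context: A Young function is a convex $\phi:[0,\infty)\to[0,\infty)$ with $\phi(x)=0\iff x=0$ and $\lim_{x\to\infty}\phi(x)=\infty$; $\Delta_2$-condition: $\phi(2x)\le k\phi(x)$ for some $k>0$ and all $x>0$. A weight function is a non-increasing locally integrable $w:(0,\infty)\to(0,\infty)$ with $\int_0^\infty w=\infty$. For measurable $f$, $\nu_f(s)=\nu\{|f|>s\}$, $f^*(t)=\inf\{s>0:\nu_f(s)\le t\}$; $L_{(\phi,w)}$ is the space of measurable $f:E\to\mathbb{C}$ with $\int_0^\infty\phi(\alpha f^*(t))w(t)\,dt<\infty$ for some $\alpha>0$, with the Luxemburg norm. $\Psi$ non-singular: $\nu(\Psi^{-1}(S))=0$ whenever $\nu(S)=0$; $\Psi^0=\mathrm{id}$. The ascent $\mathcal{A}(T)$ is the smallest integer $m$ with $\mathcal{N}(T^m)=\mathcal{N}(T^{m+1})$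 ($\mathcal{N}$ = kernel), and $\infty$ if no such $m$ exists. *)

theory Defs
  imports "HOL-Analysis.Analysis"
begin

definition young_function :: "(real \<Rightarrow> real) \<Rightarrow> bool" where
  "young_function \<phi> \<longleftrightarrow> convex_on {0..} \<phi> \<and> (\<forall>x\<ge>0. \<phi> x \<ge> 0)
     \<and> (\<forall>x\<ge>0. \<phi> x = 0 \<longleftrightarrow> x = 0) \<and> filterlim \<phi> at_top at_top"

definition delta2 :: "(real \<Rightarrow> real) \<Rightarrow> bool" where
  "delta2 \<phi> \<longleftrightarrow> (\<exists>k>0. \<forall>x>0. \<phi> (2 * x) \<le> k * \<phi> x)"

definition weight_function :: "(real \<Rightarrow> real) \<Rightarrow> bool" where
  "weight_function w \<longleftrightarrow> (\<forall>t>0. w t > 0)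
     \<and> (\<forall>s t. 0 < s \<longrightarrow> s \<le> t \<longrightarrow> w t \<le> w s)
     \<and> (\<forall>a b. 0 < a \<longrightarrow> set_integrable lborel {a..b} w)
     \<and> (\<integral>\<^sup>+ t \<in> {0<..}. ennreal (w t) \<partial>lborel) = \<infinity>"

definition distrib_fun :: "'a measure \<Rightarrow> ('a \<Rightarrow> complex) \<Rightarrow> real \<Rightarrow> ennreal" where
  "distrib_fun M f s = emeasure M {x \<in> space M. cmod (f x) > s}"

text \<open>Decreasing rearrangement f*(t) = inf {s > 0. nu_f(s) <= t}, valued in extended reals
  (infimum of the empty set is +infinity).\<close>
definition rearr :: "'a measure \<Rightarrow> ('a \<Rightarrow> complex) \<Rightarrow> real \<Rightarrow> ereal" where
  "rearr M f t = Inf (ereal ` {s. s > 0 \<and> distrib_fun M f s \<le> ennreal t})"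

definition OL_modular :: "'a measure \<Rightarrow> (real \<Rightarrow> real) \<Rightarrow> (real \<Rightarrow> real) \<Rightarrow> real
    \<Rightarrow> ('a \<Rightarrow> complex) \<Rightarrow> ennreal" where
  "OL_modular M \<phi> w \<alpha> f = (\<integral>\<^sup>+ t \<in> {0<..}.
      (if rearr M f t = \<infinity> then \<infinity> else ennreal (\<phi> (\<alpha> * real_of_ereal (rearr M f t)) * w t)) \<partial>lborel)"

text \<open>The Orlicz-Lorentz space L_(phi,w) (as a set of representatives).\<close>
definition OL_space :: "'a measure \<Rightarrow> (real \<Rightarrow> real) \<Rightarrow> (real \<Rightarrow> real) \<Rightarrow> ('a \<Rightarrow> complex) set" where
  "OL_space M \<phi> w = {f. f \<in> borel_measurable M \<and> (\<exists>\<alpha>>0. OL_modular M \<phi> w \<alpha> f < \<infinity>)}"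

definition non_singular :: "'a measure \<Rightarrow> ('a \<Rightarrow> 'a) \<Rightarrow> bool" where
  "non_singular M \<Psi> \<longleftrightarrow> (\<forall>S\<in>sets M. emeasure M S = 0 \<longrightarrow> emeasure M (\<Psi> -` S \<inter> space M) = 0)"

text \<open>Kernel of (C_Psi)^m = C_(Psi^m) on L_(phi,w): f with f o Psi^m = 0 a.e.\<close>
definition comp_kernel :: "'a measure \<Rightarrow> (real \<Rightarrow> real) \<Rightarrow> (real \<Rightarrow> real) \<Rightarrow> ('a \<Rightarrow> 'a) \<Rightarrow> nat
    \<Rightarrow> ('a \<Rightarrow> complex) set" where
  "comp_kernel M \<phi> w \<Psi> m = {f \<in> OL_space M \<phi> w. AE x in M. f ((\<Psi> ^^ m) x) = 0}"

definition comp_ascent :: "'a measure \<Rightarrow> (real \<Rightarrow> real) \<Rightarrow> (real \<Rightarrow> real) \<Rightarrow> ('a \<Rightarrow> 'a) \<Rightarrow> enat" where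
  "comp_ascent M \<phi> w \<Psi> =
     (if \<exists>m. comp_kernel M \<phi> w \<Psi> m = comp_kernel M \<phi> w \<Psi> (Suc m)
      then enat (LEAST m. comp_kernel M \<phi> w \<Psi> m = comp_kernel M \<phi> w \<Psi> (Suc m))
      else \<infinity>)"

end

theory Submission
  imports Defs
begin

lemma funpow_meas:
  assumes meas: "\<Psi> \<in> measurable M M"
  shows "(\<Psi> ^^ k) \<in> measurable M M"
proof (induction k)
  case 0 then show ?case by (simp add: measurable_ident)
next
  case (Suc k)
  have "\<Psi> \<circ> (\<Psi> ^^ k) \<in> measurable M M" by (rule measurable_comp[OF Suc.IH meas])
  then show ?case by (simp only: funpow.simps)
qed

lemma funpow_space: "\<Psi> \<in> measurable M M \<Longrightarrow> x \<in> space M \<Longrightarrow> (\<Psi> ^^ k) x \<in> space M"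
  by (rule measurable_space[OF funpow_meas])

lemma funpow_img: assumes img: "\<forall>S \<in> sets M. \<Psi> ` S \<in> sets M" and S: "S \<in> sets M"
  shows "(\<Psi> ^^ k) ` S \<in> sets M"
proof (induction k)
  case 0 then show ?case using S by simp
next
  case (Suc k)
  have "(\<Psi> ^^ Suc k) ` S = \<Psi> ` ((\<Psi> ^^ k) ` S)" by (simp add: image_comp)
  moreover have "\<Psi> ` ((\<Psi> ^^ k) ` S) \<in> sets M" using img Suc.IH by (rule bspec)
  ultimately show ?case by simp
qed

lemma ns_step:
  assumes meas: "\<Psi> \<in> measurable M M" and ns: "non_singular M \<Psi>" and N: "N \<in> sets M"
    and z: "emeasure M ((\<Psi> ^^ k) -` N \<inter> space M) = 0"
  shows "emeasure M ((\<Psi> ^^ Suc k) -` N \<inter> space M) = 0"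
proof -
  have eq: "(\<Psi> ^^ Suc k) -` N \<inter> space M = \<Psi> -` ((\<Psi> ^^ k) -` N \<inter> space M) \<inter> space M"
    using measurable_space[OF meas] by (auto simp: funpow_Suc_right simp del: funpow.simps)
  have X: "(\<Psi> ^^ k) -` N \<inter> space M \<in> sets M"
    using measurable_sets[OF funpow_meas[OF meas] N] .
  have "emeasure M (\<Psi> -` ((\<Psi> ^^ k) -` N \<inter> space M) \<inter> space M) = 0"
    using ns X z unfolding non_singular_def by blast
  then show ?thesis by (simp only: eq)
qed

lemma ns_iter:
  assumes meas: "\<Psi> \<in> measurable M M" and ns: "non_singular M \<Psi>" and N: "N \<in> sets M"
    and z: "emeasure M N = 0"
  shows "emeasure M ((\<Psi> ^^ k) -` N \<inter> space M) = 0"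
proof (induction k)
  case 0 then show ?case using z sets.sets_into_space[OF N] by (simp add: Int_absorb2)
next
  case (Suc k) then show ?case using ns_step[OF meas ns N] by blast
qed

lemma finite_pos_subset:
  assumes "sigma_finite_measure M" "W \<in> sets M" "emeasure M W > 0"
  obtains Z where "Z \<in> sets M" "Z \<subseteq> W" "emeasure M Z < \<infinity>" "emeasure M Z > 0"
proof (cases "emeasure M W = \<infinity>")
  case True
  then obtain Z where "Z \<in> sets M" "Z \<subseteq> W" "emeasure M Z < \<infinity>" "emeasure M Z > ennreal 0"
    using sigma_finite_measure.approx_PInf_emeasure_with_finite[OF assms(1) assms(2), of 0] by blast
  then show ?thesis using that by simp
next
  case False
  then show ?thesis using that assms by (simp add: top.not_eq_extremum)
qed

theorem theorem3p9:
  fixes M :: "'a measure" and \<phi> w :: "real \<Rightarrow> real" and \<Psi> :: "'a \<Rightarrow> 'a"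
  assumes "sigma_finite_measure M"
    and "young_function \<phi>" and "delta2 \<phi>"
    and "weight_function w"
    and "\<Psi> \<in> measurable M M" and "non_singular M \<Psi>"
    and "\<forall>f \<in> OL_space M \<phi> w. f \<circ> \<Psi> \<in> OL_space M \<phi> w"
    and "\<forall>S \<in> sets M. \<Psi> ` S \<in> sets M"
    and "comp_ascent M \<phi> w \<Psi> = \<infinity>"
  shows "\<exists>A :: nat \<Rightarrow> 'a set. (\<forall>m. A m \<in> sets M) \<and>
    (\<forall>m>1. 0 < emeasure M (A m) \<and> emeasure M (A m) < \<infinity>
       \<and> (\<exists>B \<in> sets M. A m \<subseteq> (\<Psi> ^^ (m - 1)) ` B)
       \<and> (\<forall>S \<in> sets M. emeasure M S > 0 \<longrightarrow> A m \<noteq> (\<Psi> ^^ m) ` S))"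
proof -
  note meas = assms(5) and ns = assms(6)
  define P where "P k N = (\<Psi> ^^ k) -` N \<inter> space M" for k N
  have Pset: "P k N \<in> sets M" if "N \<in> sets M" for k N
    unfolding P_def using measurable_sets[OF funpow_meas[OF meas] that] .
  have ker: "f \<in> comp_kernel M \<phi> w \<Psi> k \<longleftrightarrow> f \<in> OL_space M \<phi> w \<and>
      emeasure M (P k {y \<in> space M. f y \<noteq> 0}) = 0" if "f \<in> OL_space M \<phi> w" for f k
  proof -
    have fm: "f \<in> borel_measurable M" using that unfolding OL_space_def by blast
    have Nm: "{y \<in> space M. f y \<noteq> 0} \<in> sets M" using fm by measurable
    have "{x\<in>space M. \<not> f ((\<Psi> ^^ k) x) = 0} = P k {y \<in> space M. f y \<noteq> 0}"
      unfolding P_def using funpow_space[OF meas] by auto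
    then show ?thesis unfolding comp_kernel_def
      using AE_iff_measurable[OF Pset[OF Nm]] that by auto
  qed
  have key: "\<exists>A. A \<in> sets M \<and> 0 < emeasure M A \<and> emeasure M A < \<infinity>
       \<and> (\<exists>B \<in> sets M. A \<subseteq> (\<Psi> ^^ k) ` B)
       \<and> (\<forall>S \<in> sets M. emeasure M S > 0 \<longrightarrow> A \<noteq> (\<Psi> ^^ Suc k) ` S)" for k
  proof -
    have ne: "comp_kernel M \<phi> w \<Psi> k \<noteq> comp_kernel M \<phi> w \<Psi> (Suc k)"
      using assms(9) unfolding comp_ascent_def by (auto split: if_splits)
    have sub: "comp_kernel M \<phi> w \<Psi> k \<subseteq> comp_kernel M \<phi> w \<Psi> (Suc k)"
    proof
      fix f assume f: "f \<in> comp_kernel M \<phi> w \<Psi> k"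
      then have fo: "f \<in> OL_space M \<phi> w" unfolding comp_kernel_def by blast
      have fm: "f \<in> borel_measurable M" using fo unfolding OL_space_def by blast
      have Nm: "{y \<in> space M. f y \<noteq> 0} \<in> sets M" using fm by measurable
      show "f \<in> comp_kernel M \<phi> w \<Psi> (Suc k)"
        using ker[OF fo] f ns_step[OF meas ns Nm] unfolding P_def by blast
    qed
    obtain f where f1: "f \<in> comp_kernel M \<phi> w \<Psi> (Suc k)" and f2: "f \<notin> comp_kernel M \<phi> w \<Psi> k"
      using ne sub by blast
    have fo: "f \<in> OL_space M \<phi> w" using f1 unfolding comp_kernel_def by blast
    have fm: "f \<in> borel_measurable M" using fo unfolding OL_space_def by blast
    define N where "N = {y \<in> space M. f y \<noteq> 0}"
    have Nm: "N \<in> sets M" unfolding N_def using fm by measurable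
    have z1: "emeasure M (P (Suc k) N) = 0" using ker[OF fo] f1 unfolding N_def by blast
    have z2: "emeasure M (P k N) \<noteq> 0" using ker[OF fo] f2 fo unfolding N_def by blast
    define D where "D = P k N"
    have Dm: "D \<in> sets M" unfolding D_def using Pset[OF Nm] .
    have Im: "(\<Psi> ^^ k) ` D \<in> sets M" using funpow_img[OF assms(8) Dm] .
    have IN: "(\<Psi> ^^ k) ` D \<subseteq> N" unfolding D_def P_def by auto
    have Ipos: "emeasure M ((\<Psi> ^^ k) ` D) > 0"
    proof (rule ccontr)
      assume "\<not> ?thesis"
      then have "emeasure M ((\<Psi> ^^ k) ` D) = 0" by (simp add: zero_less_iff_neq_zero)
      then have "emeasure M (P k ((\<Psi> ^^ k) ` D)) = 0"
        unfolding P_def using ns_iter[OF meas ns Im] by blast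
      moreover have "D \<subseteq> P k ((\<Psi> ^^ k) ` D)" unfolding D_def P_def by auto
      ultimately have "emeasure M D \<le> 0" using emeasure_mono[OF _ Pset[OF Im], of D k]
        by simp
      then have "emeasure M D = 0" by simp
      then show False using z2 unfolding D_def by simp
    qed
    obtain A where A: "A \<in> sets M" "A \<subseteq> (\<Psi> ^^ k) ` D" "emeasure M A < \<infinity>" "emeasure M A > 0"
      using finite_pos_subset[OF assms(1) Im Ipos] by blast
    have "\<forall>S \<in> sets M. emeasure M S > 0 \<longrightarrow> A \<noteq> (\<Psi> ^^ Suc k) ` S"
    proof (intro ballI impI notI)
      fix S assume S: "S \<in> sets M" "emeasure M S > 0" "A = (\<Psi> ^^ Suc k) ` S"
      have "S \<subseteq> P (Suc k) N"
      proof
        fix x assume x: "x \<in> S"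
        then have "(\<Psi> ^^ Suc k) x \<in> A" using S(3) by blast
        then have "(\<Psi> ^^ Suc k) x \<in> N" using A(2) IN by blast
        then show "x \<in> P (Suc k) N" unfolding P_def using x sets.sets_into_space[OF S(1)] by blast
      qed
      then have "emeasure M S \<le> emeasure M (P (Suc k) N)" by (rule emeasure_mono[OF _ Pset[OF Nm]])
      then have "emeasure M S \<le> 0" using z1 by simp
      then show False using S(2) by simp
    qed
    then show ?thesis using A Dm by blast
  qed
  then have "\<forall>k. \<exists>A. A \<in> sets M \<and> 0 < emeasure M A \<and> emeasure M A < \<infinity>
       \<and> (\<exists>B \<in> sets M. A \<subseteq> (\<Psi> ^^ k) ` B)
       \<and> (\<forall>S \<in> sets M. emeasure M S > 0 \<longrightarrow> A \<noteq> (\<Psi> ^^ Suc k) ` S)" by blast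
  from choice[OF this] obtain A where A: "\<And>k. A k \<in> sets M \<and> 0 < emeasure M (A k) \<and> emeasure M (A k) < \<infinity>
       \<and> (\<exists>B \<in> sets M. A k \<subseteq> (\<Psi> ^^ k) ` B)
       \<and> (\<forall>S \<in> sets M. emeasure M S > 0 \<longrightarrow> A k \<noteq> (\<Psi> ^^ Suc k) ` S)"
    by blast
  show ?thesis
  proof (intro exI[of _ "\<lambda>m. A (m - 1)"] conjI allI impI)
    fix m show "A (m - 1) \<in> sets M" using A by blast
  next
    fix m :: nat assume "m > 1"
    then have m: "Suc (m - 1) = m" by simp
    show "0 < emeasure M (A (m - 1))" "emeasure M (A (m - 1)) < \<infinity>"
      "\<exists>B \<in> sets M. A (m - 1) \<subseteq> (\<Psi> ^^ (m - 1)) ` B"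
      using A[of "m - 1"] by auto
    show "\<forall>S \<in> sets M. emeasure M S > 0 \<longrightarrow> A (m - 1) \<noteq> (\<Psi> ^^ m) ` S"
      using A[of "m - 1"] unfolding m by blast
  qed
qed

end
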